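(* For every family $(\alpha_k)$ as below, $\mathrm{3SAT}^{\mathrm C}\in\mathrm{P}^*_{\mathrm{lsis}}$.
   Context: $\mathbb B=\{T,F\}$. Let $v_1,v_2,\dots$ be propositional variables. For $k\in\mathbb N$ let $d(k)=\binom{2k}{1}+\binom{2k}{2}+\binom{2k}{3}$, and let $L_k$ be the set of sets $L$ of literals from $\{v_1,\neg v_1,\dots,v_k,\neg v_k\}$ with $1\le |L|\le 3$. Let $(\alpha_k)_{k\in\mathbb N}$ be bijections $\alpha_k:[1,d(k)]\to L_k$ such that (i) for all $i$ and $j\in[1,d(i)]$, $\alpha_{i+1}(j)=\alpha_i(j)$; and (ii) the map $\alpha(i)=\alpha_k(i)$ for the least $k$ with $i\le d(k)$ is polynomial-time computable. For $n\in\mathbb N$ let $k$ be such that $d(k)\le n<d(k+1)$ and define $\mathrm{3SAT}^{\mathrm C}_n:\mathbb B^n\to\mathbb B$ by $\mathrm{3SAT}^{\mathrm C}_n(b_1,\dots,b_n)=T$ iff $\bigwedge_{i\in[1,d(k)],\,b_i=T}\bigvee\alpha_k(i)$ is satisfiable; $\mathrm{3SAT}^{\mathrm C}=(\mathrm{3SAT}^{\mathrm C}_n)_n$. A primitive instruction is one of: a plain basic instruction $a$, a positive test instruction $+a$, a negative test instruction $-a$, a forward jump instruction $\#l$ ($l\in\mathbb N$), or the termination instruction $!$. An instruction sequence is a finite nonempty sequence $X=u_1;\dots;u_k$ of primitive instructions; $|X|=k$. $\mathrm{SIS}_{br}$ is the set of instruction sequences all of whose basic instructions belong to $\{\mathrm{in}{:}i.\mathrm{get}: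 i\ge1\}\cup\{\mathrm{out}.\mathrm{set}{:}T\}\cup\{\mathrm{split}(\mathrm{par}{:}i),\mathrm{reply}(\mathrm{par}{:}i): i\ge1\}$, where $\mathrm{in}{:}i$, $\mathrm{out}$ name Boolean registers and $\mathrm{par}{:}i$ are Boolean parameters. Splitting execution of $X\in\mathrm{SIS}_{br}$ on input $b\in\mathbb B^n$ is a finite tree of branches; each branch has a counter (initially 1) and a partial assignment $\sigma$ of Boolean parameters (initially empty). A branch deadlocks if its counter exceeds $k$, if it reaches $\#0$, if it executes $\mathrm{in}{:}j.\mathrm{get}$ with $j>n$, if it executes $\mathrm{reply}(p)$ with $\sigma(p)$ undefined, or if it executes $\mathrm{split}(p)$ with $\sigma(p)$ defined. At position $i$: $!$ terminates the branch successfully; $\#l$ ($l>0$) moves the counter to $i+l$; for $u_i\in\{a,+a,-a\}$ the basic instruction $a$ yields reply $r$ ($\mathrm{in}{:}j.\mathrm{get}$ yields $b_j$; $\mathrm{out}.\mathrm{set}{:}T$ yields $T$; $\mathrm{reply}(p)$ yields $\sigma(p)$; $\mathrm{split}(p)$ with $\sigma(p)$ undefined replaces the branch by two branches, one with $r=T$ and assignment $\sigma\cup\{p\mapsto T\}$ and one with $r=F$ and assignment $\sigma\cup\{p\mapsto F\}$), and the counter becomes $i+1$ for $a$; for $+a$: $i+1$ if $r=T$, $i+2$ if $r=F$; for $-a$: $i+1$ if $r=F$, $i+2$ if $r=T$. $X$ splitting computes $f:\mathbb B^n\to\mathbb B$ if for every $b\in\mathbb B^n$, every branch terminates successfully, and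 $f(b)=T$ iff some branch executes $\mathrm{out}.\mathrm{set}{:}T$. $\mathrm{P}^*_{\mathrm{lsis}}$ is the class of Boolean function families $(f_n)_{n\in\mathbb N}$, $f_n:\mathbb B^n\to\mathbb B$, for which there is a polynomial $h$ such that for every $n$ some $X\in\mathrm{SIS}_{br}$ splitting computes $f_n$ with $|X|\le h(n)$. *)

theory Defs
  imports Main "HOL-Computational_Algebra.Polynomial"
begin

text \<open>A literal is a pair (v, s): (v, True) stands for the variable v_v, (v, False) for its negation.\<close>
type_synonym literal = "nat \<times> bool"

definition d :: "nat \<Rightarrow> nat" where
  "d k = (2*k choose 1) + (2*k choose 2) + (2*k choose 3)"

definition Lits :: "nat \<Rightarrow> literal set set" where
  "Lits k = {L. L \<subseteq> {1..k} \<times> UNIV \<and> 1 \<le> card L \<and> card L \<le> 3}"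

text \<open>The unique k with d k \<le> n < d (k+1).\<close>
definition kidx :: "nat \<Rightarrow> nat" where
  "kidx n = (GREATEST k. d k \<le> n)"

text \<open>Inputs b in B^n are lists of length n; b_i is b ! (i-1).\<close>
definition threeSATC :: "(nat \<Rightarrow> nat \<Rightarrow> literal set) \<Rightarrow> nat \<Rightarrow> bool list \<Rightarrow> bool" where
  "threeSATC \<alpha> n b =
     (\<exists>asg :: nat \<Rightarrow> bool. \<forall>i \<in> {1..d (kidx n)}.
        b ! (i - 1) \<longrightarrow> (\<exists>(v, s) \<in> \<alpha> (kidx n) i. asg v = s))"

datatype basic = InGet nat | OutSetT | Split nat | Reply nat

datatype instr = Plain basic | PosTest basic | NegTest basic | Jump nat | Term

fun basic_ok :: "basic \<Rightarrow> bool" where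
  "basic_ok (InGet i) = (1 \<le> i)"
| "basic_ok OutSetT = True"
| "basic_ok (Split i) = (1 \<le> i)"
| "basic_ok (Reply i) = (1 \<le> i)"

fun instr_ok :: "instr \<Rightarrow> bool" where
  "instr_ok (Plain a) = basic_ok a"
| "instr_ok (PosTest a) = basic_ok a"
| "instr_ok (NegTest a) = basic_ok a"
| "instr_ok (Jump l) = True"
| "instr_ok Term = True"

definition SIS_br :: "instr list set" where
  "SIS_br = {X. X \<noteq> [] \<and> (\<forall>u \<in> set X. instr_ok u)}"

type_synonym passign = "nat \<Rightarrow> bool option"

text \<open>Possible (reply, new parameter assignment) outcomes of executing a basic instruction;
  the empty set means deadlock, two elements mean the branch splits.\<close>
fun replies :: "bool list \<Rightarrow> basic \<Rightarrow> passign \<Rightarrow> (bool \<times> passign) set" where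
  "replies b (InGet j) \<sigma> = (if 1 \<le> j \<and> j \<le> length b then {(b ! (j - 1), \<sigma>)} else {})"
| "replies b OutSetT \<sigma> = {(True, \<sigma>)}"
| "replies b (Reply p) \<sigma> = (case \<sigma> p of None \<Rightarrow> {} | Some r \<Rightarrow> {(r, \<sigma>)})"
| "replies b (Split p) \<sigma> = (case \<sigma> p of
      None \<Rightarrow> {(True, \<sigma>(p \<mapsto> True)), (False, \<sigma>(p \<mapsto> False))}
    | Some _ \<Rightarrow> {})"

text \<open>One step of a branch: configuration (counter, parameter assignment).\<close>
fun step :: "instr list \<Rightarrow> bool list \<Rightarrow> nat \<times> passign \<Rightarrow> nat \<times> passign \<Rightarrow> bool" where
  "step X b (i, \<sigma>) (i', \<sigma>') =
     (1 \<le> i \<and> i \<le> length X \<and>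
      (case X ! (i - 1) of
         Jump l \<Rightarrow> 0 < l \<and> i' = i + l \<and> \<sigma>' = \<sigma>
       | Plain a \<Rightarrow> (\<exists>r. (r, \<sigma>') \<in> replies b a \<sigma> \<and> i' = i + 1)
       | PosTest a \<Rightarrow> (\<exists>r. (r, \<sigma>') \<in> replies b a \<sigma> \<and> i' = (if r then i + 1 else i + 2))
       | NegTest a \<Rightarrow> (\<exists>r. (r, \<sigma>') \<in> replies b a \<sigma> \<and> i' = (if r then i + 2 else i + 1))
       | Term \<Rightarrow> False))"

definition reach :: "instr list \<Rightarrow> bool list \<Rightarrow> nat \<times> passign \<Rightarrow> bool" where
  "reach X b c = (step X b)\<^sup>*\<^sup>* (1, Map.empty) c"

definition at_term :: "instr list \<Rightarrow> nat \<Rightarrow> bool" where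
  "at_term X i = (1 \<le> i \<and> i \<le> length X \<and> X ! (i - 1) = Term)"

definition at_out :: "instr list \<Rightarrow> nat \<Rightarrow> bool" where
  "at_out X i = (1 \<le> i \<and> i \<le> length X \<and>
     X ! (i - 1) \<in> {Plain OutSetT, PosTest OutSetT, NegTest OutSetT})"

text \<open>Since jumps are forward and every step increases the counter, every branch is finite;
  hence "every branch terminates successfully" means every reachable configuration either is at
  a termination instruction or can make a step (no deadlock). A branch executes out.set:T iff it
  reaches a position holding an instruction with basic instruction out.set:T (which never deadlocks).\<close>
definition splitting_computes :: "instr list \<Rightarrow> nat \<Rightarrow> (bool list \<Rightarrow> bool) \<Rightarrow> bool" where
  "splitting_computes X n f =
     (\<forall>b. length b = n \<longrightarrow>
        (\<forall>c. reach X b c \<longrightarrow> at_term X (fst c) \<or> (\<exists>c'. step X b c c')) \<and>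
        (f b \<longleftrightarrow> (\<exists>c. reach X b c \<and> at_out X (fst c))))"

definition P_lsis :: "(nat \<Rightarrow> bool list \<Rightarrow> bool) set" where
  "P_lsis = {F. \<exists>h :: nat poly. \<forall>n. \<exists>X \<in> SIS_br.
              splitting_computes X n (F n) \<and> length X \<le> poly h n}"

end

theory Submission
  imports Defs "HOL-Library.Product_Lexorder"
begin

definition tst :: "literal \<Rightarrow> instr" where
  "tst l = (if snd l then PosTest (Reply (fst l)) else NegTest (Reply (fst l)))"

definition blk :: "(nat \<Rightarrow> nat \<Rightarrow> literal) \<Rightarrow> nat \<Rightarrow> nat \<Rightarrow> instr" where
  "blk lit i r = (if r = 0 then NegTest (InGet i) else if r = 1 then Jump 8
     else if r = 2 then tst (lit i 0) else if r = 3 then Jump 6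
     else if r = 4 then tst (lit i 1) else if r = 5 then Jump 4
     else if r = 6 then tst (lit i 2) else if r = 7 then Jump 2 else Term)"

definition instrAt :: "nat \<Rightarrow> nat \<Rightarrow> (nat \<Rightarrow> nat \<Rightarrow> literal) \<Rightarrow> nat \<Rightarrow> instr" where
  "instrAt K D lit p = (if p \<le> K then Plain (Split p)
     else if p \<le> K + 9*D then blk lit ((p-K-1) div 9 + 1) ((p-K-1) mod 9)
     else if p = K + 9*D + 1 then Plain OutSetT else Term)"

definition prog :: "nat \<Rightarrow> nat \<Rightarrow> (nat \<Rightarrow> nat \<Rightarrow> literal) \<Rightarrow> instr list" where
  "prog K D lit = map (instrAt K D lit) [1..<K+9*D+3]"

lemma step_plain: "1 \<le> p \<Longrightarrow> p \<le> length Y \<Longrightarrow> Y ! (p-1) = Plain a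
   \<Longrightarrow> (r, \<sigma>') \<in> replies b a \<sigma> \<Longrightarrow> step Y b (p, \<sigma>) (p+1, \<sigma>')"
  apply (simp only: step.simps)
  apply (simp only: instr.case)
  apply (intro conjI exI[of _ r])
  apply simp_all
  done

lemma step_pos: "1 \<le> p \<Longrightarrow> p \<le> length Y \<Longrightarrow> Y ! (p-1) = PosTest a
   \<Longrightarrow> (r, \<sigma>') \<in> replies b a \<sigma> \<Longrightarrow> step Y b (p, \<sigma>) (if r then p+1 else p+2, \<sigma>')"
  apply (simp only: step.simps)
  apply (simp only: instr.case)
  apply (intro conjI exI[of _ r])
  apply simp_all
  done

lemma step_neg: "1 \<le> p \<Longrightarrow> p \<le> length Y \<Longrightarrow> Y ! (p-1) = NegTest a
   \<Longrightarrow> (r, \<sigma>') \<in> replies b a \<sigma> \<Longrightarrow> step Y b (p, \<sigma>) (if r then p+2 else p+1, \<sigma>')"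
  apply (simp only: step.simps)
  apply (simp only: instr.case)
  apply (intro conjI exI[of _ r])
  apply simp_all
  done

lemma step_jump: "1 \<le> p \<Longrightarrow> p \<le> length Y \<Longrightarrow> Y ! (p-1) = Jump l \<Longrightarrow> 0 < l
   \<Longrightarrow> step Y b (p, \<sigma>) (p + l, \<sigma>)"
  by simp

locale P3 =
  fixes K D n :: nat and Cl :: "nat \<Rightarrow> literal set" and lit :: "nat \<Rightarrow> nat \<Rightarrow> literal"
  assumes Dn: "D \<le> n"
  and litin: "\<And>i j. 1 \<le> i \<Longrightarrow> i \<le> D \<Longrightarrow> j < 3 \<Longrightarrow> lit i j \<in> Cl i"
  and litall: "\<And>i l. 1 \<le> i \<Longrightarrow> i \<le> D \<Longrightarrow> l \<in> Cl i \<Longrightarrow> \<exists>j<3. lit i j = l"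
  and litv: "\<And>i l. 1 \<le> i \<Longrightarrow> i \<le> D \<Longrightarrow> l \<in> Cl i \<Longrightarrow> 1 \<le> fst l \<and> fst l \<le> K"
begin

abbreviation "X \<equiv> prog K D lit"

lemma lenX[simp]: "length X = K + 9*D + 2"
  by (simp add: prog_def)

lemma nthX: "1 \<le> p \<Longrightarrow> p \<le> K + 9*D + 2 \<Longrightarrow> X ! (p-1) = instrAt K D lit p"
  by (simp add: prog_def)

lemma at_split: "1 \<le> p \<Longrightarrow> p \<le> K \<Longrightarrow> X ! (p-1) = Plain (Split p)"
  using nthX[of p] by (simp add: instrAt_def)

lemma at_blk: "q < D \<Longrightarrow> r < 9 \<Longrightarrow> X ! (K + 9*q + r) = blk lit (Suc q) r"
proof -
  assume a: "q < D" "r < 9"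
  have "X ! (Suc (K + 9*q + r) - 1) = instrAt K D lit (Suc (K + 9*q + r))"
    using a by (intro nthX) auto
  moreover have "instrAt K D lit (Suc (K + 9*q + r)) = blk lit (Suc q) r"
    using a by (simp add: instrAt_def)
  ultimately show ?thesis by simp
qed

lemma at_outT: "X ! (K + 9*D) = Plain OutSetT"
  using nthX[of "K+9*D+1"] by (simp add: instrAt_def)

lemma at_termT: "X ! (K + 9*D + 1) = Term"
  using nthX[of "K+9*D+2"] by (simp add: instrAt_def)

definition full :: "passign \<Rightarrow> bool" where
  "full \<sigma> = (\<forall>x. (\<sigma> x \<noteq> None) = (1 \<le> x \<and> x \<le> K))"

definition good :: "bool list \<Rightarrow> passign \<Rightarrow> nat \<Rightarrow> bool" where
  "good b \<sigma> c = (b ! (c-1) \<longrightarrow> (\<exists>j<3. \<sigma> (fst (lit c j)) = Some (snd (lit c j))))"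

definition Inv :: "bool list \<Rightarrow> nat \<times> passign \<Rightarrow> bool" where
  "Inv b c = (case c of (p, \<sigma>) \<Rightarrow>
     (1 \<le> p \<and> p \<le> K \<and> (\<forall>x. (\<sigma> x \<noteq> None) = (1 \<le> x \<and> x < p))) \<or>
     (full \<sigma> \<and> ((\<exists>q r. q < D \<and> r < 9 \<and> p = Suc (K + 9*q + r) \<and> (\<forall>c\<in>{1..q}. good b \<sigma> c)
          \<and> (r \<in> {1,3,5,7} \<longrightarrow> good b \<sigma> (Suc q)))
        \<or> ((p = K + 9*D + 1 \<or> p = K + 9*D + 2) \<and> (\<forall>c\<in>{1..D}. good b \<sigma> c)))))"

lemma r9: "r < (9::nat) \<Longrightarrow> r = 0 \<or> r = 1 \<or> r = 2 \<or> r = 3 \<or> r = 4 \<or> r = 5 \<or> r = 6 \<or> r = 7 \<or> r = 8"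
  by auto

lemma blk_step:
  assumes q: "q < D" and r: "r < 9" and s: "step X b (Suc (K + 9*q + r), \<sigma>) (p', \<sigma>')"
    and lb: "length b = n"
  shows "\<sigma>' = \<sigma> \<and> r \<noteq> 8 \<and>
    ((r = 0 \<and> (p' = Suc (K + 9*q + 1) \<and> \<not> b ! q \<or> p' = Suc (K + 9*q + 2))) \<or>
     (r \<in> {1,3,5,7} \<and> p' = Suc (K + 9*Suc q)) \<or>
     (r \<in> {2,4,6} \<and> (p' = Suc (K + 9*q + r + 2) \<or>
        (p' = Suc (K + 9*q + r + 1) \<and>
          \<sigma> (fst (lit (Suc q) ((r-2) div 2))) = Some (snd (lit (Suc q) ((r-2) div 2)))))))"
proof -
  have sq: "1 \<le> Suc q" "Suc q \<le> length b" using q lb Dn by auto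
  have ins: "X ! (K + 9*q + r) = blk lit (Suc q) r" using at_blk q r by simp
  have st: "case blk lit (Suc q) r of
         Jump l \<Rightarrow> 0 < l \<and> p' = Suc (K + 9*q + r) + l \<and> \<sigma>' = \<sigma>
       | Plain a \<Rightarrow> (\<exists>rr. (rr, \<sigma>') \<in> replies b a \<sigma> \<and> p' = Suc (K + 9*q + r) + 1)
       | PosTest a \<Rightarrow> (\<exists>rr. (rr, \<sigma>') \<in> replies b a \<sigma> \<and> p' = (if rr then Suc (K + 9*q + r) + 1 else Suc (K + 9*q + r) + 2))
       | NegTest a \<Rightarrow> (\<exists>rr. (rr, \<sigma>') \<in> replies b a \<sigma> \<and> p' = (if rr then Suc (K + 9*q + r) + 2 else Suc (K + 9*q + r) + 1))
       | Term \<Rightarrow> False"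
    using s unfolding step.simps diff_Suc_1 ins by blast
  from r9[OF r] show ?thesis
    using st sq
    by (elim disjE) (auto simp: blk_def tst_def split: option.splits if_splits)
qed

lemma split_step:
  assumes p: "1 \<le> p" "p \<le> K" and s: "step X b (p, \<sigma>) (p', \<sigma>')"
  shows "p' = Suc p \<and> \<sigma> p = None \<and> (\<exists>v. \<sigma>' = \<sigma>(p \<mapsto> v))"
  using s at_split[OF p] p by (auto split: option.splits)

lemma out_step:
  assumes s: "step X b (K + 9*D + 1, \<sigma>) (p', \<sigma>')"
  shows "p' = K + 9*D + 2 \<and> \<sigma>' = \<sigma>"
  using s at_outT by auto

lemma term_step: "\<not> step X b (K + 9*D + 2, \<sigma>) c'"
  using at_termT by (cases c') auto

lemma Inv_init: "Inv b (1, Map.empty)"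
proof (cases "K \<ge> 1")
  case True thus ?thesis by (simp add: Inv_def)
next
  case False
  hence K0: "K = 0" by simp
  have f: "full Map.empty" unfolding full_def using K0 by simp
  show ?thesis
  proof (cases "D = 0")
    case True thus ?thesis using K0 f unfolding Inv_def by simp
  next
    case False
    hence "\<exists>q r. q < D \<and> r < 9 \<and> (1::nat) = Suc (K + 9*q + r) \<and> (\<forall>c\<in>{1..q}. good b Map.empty c)
          \<and> (r \<in> {1,3,5,7} \<longrightarrow> good b Map.empty (Suc q))"
      using K0 by (intro exI[of _ 0]) auto
    thus ?thesis using f unfolding Inv_def by simp
  qed
qed

lemma Inv_step:
  assumes I: "Inv b (p, \<sigma>)" and s: "step X b (p, \<sigma>) (p', \<sigma>')" and lb: "length b = n"
  shows "Inv b (p', \<sigma>')"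
proof -
  consider (A) "1 \<le> p \<and> p \<le> K \<and> (\<forall>x. (\<sigma> x \<noteq> None) = (1 \<le> x \<and> x < p))"
    | (B) q r where "full \<sigma>" "q < D" "r < 9" "p = Suc (K + 9*q + r)" "\<forall>c\<in>{1..q}. good b \<sigma> c"
          "r \<in> {1,3,5,7} \<longrightarrow> good b \<sigma> (Suc q)"
    | (C) "full \<sigma>" "p = K + 9*D + 1 \<or> p = K + 9*D + 2" "\<forall>c\<in>{1..D}. good b \<sigma> c"
    using I unfolding Inv_def by auto
  then show ?thesis
  proof cases
    case A
    then obtain v where e: "p' = Suc p" "\<sigma> p = None" "\<sigma>' = \<sigma>(p \<mapsto> v)"
      using split_step[of p b \<sigma> p' \<sigma>'] s by auto
    show ?thesis
    proof (cases "Suc p \<le> K")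
      case True thus ?thesis using A e by (auto simp: Inv_def)
    next
      case False
      hence pK: "p = K" using A by simp
      have f: "full \<sigma>'" using A e pK by (auto simp: full_def)
      show ?thesis
      proof (cases "D = 0")
        case True thus ?thesis using f e pK unfolding Inv_def by simp
      next
        case False
        hence "\<exists>q r. q < D \<and> r < 9 \<and> p' = Suc (K + 9*q + r) \<and> (\<forall>c\<in>{1..q}. good b \<sigma>' c)
              \<and> (r \<in> {1,3,5,7} \<longrightarrow> good b \<sigma>' (Suc q))"
          using pK e by (intro exI[of _ 0]) auto
        thus ?thesis using f by (simp add: Inv_def)
      qed
    qed
  next
    case B
    note bs = blk_step[OF B(2,3) s[unfolded B(4)] lb]
    have gq: "good b \<sigma> (Suc q)" if "r \<in> {1,3,5,7}" using B that by auto
    have go0: "good b \<sigma> (Suc q)" if "r = 0" "\<not> b ! q"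
      using that by (simp add: good_def)
    have gl: "good b \<sigma> (Suc q)" if "\<sigma> (fst (lit (Suc q) ((r-2) div 2))) = Some (snd (lit (Suc q) ((r-2) div 2)))"
      "r \<in> {2,4,6}"
      using that unfolding good_def by (intro impI exI[of _ "(r-2) div 2"]) auto
    have inb: "Inv b (Suc (K + 9*q + r'), \<sigma>)" if "r' < 9" "r' \<in> {1,3,5,7} \<longrightarrow> good b \<sigma> (Suc q)" for r'
    proof -
      have "\<exists>qq rr. qq<D \<and> rr<9 \<and> Suc(K+9*q+r') = Suc(K+9*qq+rr) \<and> (\<forall>c\<in>{1..qq}. good b \<sigma> c)
         \<and> (rr\<in>{1,3,5,7} \<longrightarrow> good b \<sigma> (Suc qq))" using that B by blast
      thus ?thesis using B(1) unfolding Inv_def by simp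
    qed
    have nxt: "Inv b (Suc (K + 9*Suc q), \<sigma>)" if "good b \<sigma> (Suc q)"
    proof (cases "Suc q < D")
      case True
      have "\<forall>c\<in>{1..Suc q}. good b \<sigma> c" using B that by (auto simp: le_Suc_eq)
      hence "\<exists>qq rr. qq<D \<and> rr<9 \<and> Suc(K+9*Suc q) = Suc(K+9*qq+rr) \<and> (\<forall>c\<in>{1..qq}. good b \<sigma> c)
         \<and> (rr\<in>{1,3,5,7} \<longrightarrow> good b \<sigma> (Suc qq))" using True
        by (intro exI[of _ "Suc q"] exI[of _ 0]) auto
      thus ?thesis using B(1) unfolding Inv_def by simp
    next
      case False
      hence "Suc q = D" using B by simp
      moreover have "\<forall>c\<in>{1..Suc q}. good b \<sigma> c" using B that by (auto simp: le_Suc_eq)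
      ultimately show ?thesis using B unfolding Inv_def by auto
    qed
    have e: "\<sigma>' = \<sigma>" using bs by simp
    consider (r0) "r = 0" "p' = Suc (K + 9*q + 1)" "\<not> b ! q" | (r0') "r = 0" "p' = Suc (K + 9*q + 2)"
      | (odd) "r \<in> {1,3,5,7}" "p' = Suc (K + 9*Suc q)"
      | (ev2) "r \<in> {2,4,6}" "p' = Suc (K + 9*q + (r + 2))"
      | (ev1) "r \<in> {2,4,6}" "p' = Suc (K + 9*q + (r + 1))"
          "\<sigma> (fst (lit (Suc q) ((r-2) div 2))) = Some (snd (lit (Suc q) ((r-2) div 2)))"
      using bs by (auto simp: add.assoc)
    then show ?thesis
    proof cases
      case r0 thus ?thesis using e inb[of 1] go0 by simp
    next
      case r0' thus ?thesis using e inb[of 2] by simp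
    next
      case odd thus ?thesis using e nxt gq by simp
    next
      case ev2
      have "r + 2 < 9" "r + 2 \<notin> {1,3,5,7}" using ev2 by auto
      thus ?thesis using e inb[of "r+2"] ev2 by simp
    next
      case ev1
      have "r + 1 < 9" using ev1 by auto
      thus ?thesis using e inb[of "r+1"] ev1 gl by simp
    qed
  next
    case C
    show ?thesis
    proof (cases "p = K + 9*D + 1")
      case True
      thus ?thesis using out_step[of b \<sigma> p' \<sigma>'] s C by (simp add: Inv_def)
    next
      case False
      hence "p = K + 9*D + 2" using C by simp
      thus ?thesis using term_step s by blast
    qed
  qed
qed

lemma reach_Inv:
  assumes "reach X b c" and lb: "length b = n" shows "Inv b c"
proof -
  have "(step X b)\<^sup>*\<^sup>* (1, Map.empty) c" using assms(1) by (simp add: reach_def)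
  thus ?thesis
  proof (induction rule: rtranclp_induct)
    case base show ?case by (rule Inv_init)
  next
    case (step y z)
    obtain p \<sigma> where y: "y = (p, \<sigma>)" by fastforce
    obtain p' \<sigma>' where z: "z = (p', \<sigma>')" by fastforce
    show ?case using Inv_step[of b p \<sigma> p' \<sigma>'] lb step.IH step.hyps(2) unfolding y z by blast
  qed
qed

lemma step_ex_gen: "1 \<le> p \<Longrightarrow> p \<le> length Y \<Longrightarrow> Y ! (p-1) \<in> {Plain a, PosTest a, NegTest a}
   \<Longrightarrow> (r, \<sigma>') \<in> replies b a \<sigma> \<Longrightarrow> \<exists>c'. step Y b (p, \<sigma>) c'"
proof -
  assume a: "1 \<le> p" "p \<le> length Y" "Y ! (p-1) \<in> {Plain a, PosTest a, NegTest a}"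
    "(r, \<sigma>') \<in> replies b a \<sigma>"
  from a(3) consider "Y ! (p-1) = Plain a" | "Y ! (p-1) = PosTest a" | "Y ! (p-1) = NegTest a" by blast
  then show ?thesis
  proof cases
    case 1
    have "step Y b (p, \<sigma>) (p+1, \<sigma>')" using step_plain[OF a(1,2) 1 a(4)] .
    thus ?thesis ..
  next
    case 2
    have "step Y b (p, \<sigma>) (if r then p+1 else p+2, \<sigma>')" using step_pos[OF a(1,2) 2 a(4)] .
    thus ?thesis ..
  next
    case 3
    have "step Y b (p, \<sigma>) (if r then p+2 else p+1, \<sigma>')" using step_neg[OF a(1,2) 3 a(4)] .
    thus ?thesis ..
  qed
qed

lemma step_ex: "1 \<le> p \<Longrightarrow> p \<le> length X \<Longrightarrow> X ! (p-1) \<in> {Plain a, PosTest a, NegTest a}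
   \<Longrightarrow> (r, \<sigma>') \<in> replies b a \<sigma> \<Longrightarrow> \<exists>c'. step X b (p, \<sigma>) c'"
  by (rule step_ex_gen)

lemma no_deadlock:
  assumes I: "Inv b (p, \<sigma>)" and lb: "length b = n"
  shows "at_term X p \<or> (\<exists>c'. step X b (p, \<sigma>) c')"
proof -
  consider (A) "1 \<le> p \<and> p \<le> K \<and> (\<forall>x. (\<sigma> x \<noteq> None) = (1 \<le> x \<and> x < p))"
    | (B) q r where "full \<sigma>" "q < D" "r < 9" "p = Suc (K + 9*q + r)"
    | (C) "p = K + 9*D + 1" | (C') "p = K + 9*D + 2"
    using I unfolding Inv_def by auto
  then show ?thesis
  proof cases
    case A
    hence "\<sigma> p = None" by auto
    hence "(True, \<sigma>(p \<mapsto> True)) \<in> replies b (Split p) \<sigma>" by simp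
    thus ?thesis using A at_split[of p] step_ex[of p "Split p" True] by auto
  next
    case B
    have ins: "X ! (p - 1) = blk lit (Suc q) r" using at_blk B by simp
    have pl: "1 \<le> p" "p \<le> length X" using B by auto
    have sq: "1 \<le> Suc q" "Suc q \<le> length b" using B lb Dn by auto
    have lv: "\<exists>x. \<sigma> (fst (lit (Suc q) j)) = Some x" if "j < 3" for j
    proof -
      have "1 \<le> fst (lit (Suc q) j) \<and> fst (lit (Suc q) j) \<le> K"
        using litv[OF sq(1) _ litin[OF sq(1) _ that]] B by simp
      thus ?thesis using B(1) unfolding full_def by (metis not_None_eq)
    qed
    have tstc: "\<exists>c'. step X b (p, \<sigma>) c'" if t1: "X ! (p-1) = tst (lit (Suc q) j)" and t2: "j < 3" for j
    proof -
      obtain x where x: "\<sigma> (fst (lit (Suc q) j)) = Some x" using lv[OF t2] by blast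
      hence "(x, \<sigma>) \<in> replies b (Reply (fst (lit (Suc q) j))) \<sigma>" by simp
      thus ?thesis using step_ex[OF pl, of "Reply (fst (lit (Suc q) j))" x \<sigma> b \<sigma>] t1
        by (auto simp: tst_def split: if_splits)
    qed
    have "(b ! q, \<sigma>) \<in> replies b (InGet (Suc q)) \<sigma>" using sq by simp
    hence c0: "r = 0 \<Longrightarrow> \<exists>c'. step X b (p, \<sigma>) c'"
      using step_ex[OF pl, of "InGet (Suc q)" "b ! q" \<sigma> b \<sigma>] ins by (simp add: blk_def)
    have cj: "\<exists>c'. step X b (p, \<sigma>) c'" if "X ! (p-1) = Jump l" "0 < l" for l
      using that pl by (intro exI[of _ "(p + l, \<sigma>)"]) simp
    from r9[OF B(3)] show ?thesis
    proof (elim disjE)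
      assume "r = 0" thus ?thesis using c0 by simp
    next
      assume "r = 1" thus ?thesis using ins cj[of 8] by (simp add: blk_def)
    next
      assume "r = 2" thus ?thesis using ins tstc[of 0] by (simp add: blk_def)
    next
      assume "r = 3" thus ?thesis using ins cj[of 6] by (simp add: blk_def)
    next
      assume "r = 4" thus ?thesis using ins tstc[of 1] by (simp add: blk_def)
    next
      assume "r = 5" thus ?thesis using ins cj[of 4] by (simp add: blk_def)
    next
      assume "r = 6" thus ?thesis using ins tstc[of 2] by (simp add: blk_def)
    next
      assume "r = 7" thus ?thesis using ins cj[of 2] by (simp add: blk_def)
    next
      assume "r = 8" thus ?thesis using ins pl by (simp add: blk_def at_term_def)
    qed
  next
    case C
    have "(True, \<sigma>) \<in> replies b OutSetT \<sigma>" by simp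
    thus ?thesis using step_ex[of p OutSetT True \<sigma> b \<sigma>] C at_outT by auto
  next
    case C'
    thus ?thesis using at_termT by (simp add: at_term_def)
  qed
qed

lemma out_pos:
  assumes I: "Inv b (p, \<sigma>)" and o: "at_out X p"
  shows "p = K + 9*D + 1 \<and> (\<forall>c\<in>{1..D}. good b \<sigma> c)"
proof -
  consider (A) "1 \<le> p \<and> p \<le> K"
    | (B) q r where "q < D" "r < 9" "p = Suc (K + 9*q + r)"
    | (C) "p = K + 9*D + 1 \<or> p = K + 9*D + 2" "\<forall>c\<in>{1..D}. good b \<sigma> c"
    using I unfolding Inv_def by auto
  then show ?thesis
  proof cases
    case A thus ?thesis using o at_split[of p] by (auto simp: at_out_def)
  next
    case B
    have ins: "X ! (p - 1) = blk lit (Suc q) r" using at_blk B by simp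
    have tn: "tst l \<noteq> Plain OutSetT \<and> tst l \<noteq> PosTest OutSetT \<and> tst l \<noteq> NegTest OutSetT" for l
      by (simp add: tst_def)
    from r9[OF B(2)] have False
      using o ins tn unfolding at_out_def by (elim disjE) (simp_all add: blk_def)
    thus ?thesis ..
  next
    case C thus ?thesis using o at_termT by (auto simp: at_out_def)
  qed
qed

lemma reach_step: "reach X b c \<Longrightarrow> step X b c c' \<Longrightarrow> reach X b c'"
  unfolding reach_def by (rule rtranclp.rtrancl_into_rtrancl)

lemma tst_reach:
  assumes q: "q < D" and r: "r < 9" and bl: "blk lit (Suc q) r = tst l"
    and x: "\<sigma> (fst l) = Some x" and R: "reach X b (Suc (K + 9*q + r), \<sigma>)"
  shows "reach X b (if x = snd l then Suc (K + 9*q + r) + 1 else Suc (K + 9*q + r) + 2, \<sigma>)"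
proof -
  let ?p = "Suc (K + 9*q + r)"
  have ins: "X ! (?p - 1) = tst l" using at_blk[OF q r] bl by simp
  have pl: "1 \<le> ?p" "?p \<le> length X" using q r by auto
  have rp: "(x, \<sigma>) \<in> replies b (Reply (fst l)) \<sigma>" using x by simp
  have "step X b (?p, \<sigma>) (if x = snd l then ?p + 1 else ?p + 2, \<sigma>)"
  proof (cases "snd l")
    case True
    hence "X ! (?p - 1) = PosTest (Reply (fst l))" using ins by (simp add: tst_def)
    from step_pos[OF pl this rp] show ?thesis using True by simp
  next
    case False
    hence "X ! (?p - 1) = NegTest (Reply (fst l))" using ins by (simp add: tst_def)
    moreover have e: "(if x = snd l then ?p + 1 else ?p + 2) = (if x then ?p + 2 else ?p + 1)"
      using False by auto
    ultimately show ?thesis unfolding e using step_neg[OF pl _ rp] by blast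
  qed
  thus ?thesis using reach_step[OF R] by blast
qed

lemma jump_reach:
  assumes q: "q < D" and r: "r < 9" and bl: "blk lit (Suc q) r = Jump l" and l: "0 < l"
    and R: "reach X b (Suc (K + 9*q + r), \<sigma>)"
  shows "reach X b (Suc (K + 9*q + r) + l, \<sigma>)"
proof -
  let ?p = "Suc (K + 9*q + r)"
  have ins: "X ! (?p - 1) = Jump l" using at_blk[OF q r] bl by simp
  have pl: "1 \<le> ?p" "?p \<le> length X" using q r by auto
  show ?thesis using reach_step[OF R step_jump[OF pl ins l]] .
qed

lemma block_pass:
  assumes q: "q < D" and lb: "length b = n"
    and R: "reach X b (Suc (K + 9*q), \<sigma>)"
    and full: "\<And>j. j < 3 \<Longrightarrow> \<exists>x. \<sigma> (fst (lit (Suc q) j)) = Some x"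
    and sat: "b ! q \<Longrightarrow> \<exists>j<3. \<sigma> (fst (lit (Suc q) j)) = Some (snd (lit (Suc q) j))"
  shows "reach X b (Suc (K + 9 * Suc q), \<sigma>)"
proof -
  let ?P = "\<lambda>r. Suc (K + 9*q + r)"
  have sq: "1 \<le> Suc q" "Suc q \<le> length b" using q lb Dn by auto
  have R0: "reach X b (?P 0, \<sigma>)" using R by simp
  have ins0: "X ! (?P 0 - 1) = NegTest (InGet (Suc q))" using at_blk[OF q, of 0] by (simp add: blk_def)
  have rp: "(b ! q, \<sigma>) \<in> replies b (InGet (Suc q)) \<sigma>" using sq by simp
  have pl: "1 \<le> ?P 0" "?P 0 \<le> length X" using q by auto
  have R0': "reach X b (if b ! q then ?P 0 + 2 else ?P 0 + 1, \<sigma>)"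
    using reach_step[OF R0 step_neg[OF pl ins0 rp]] .
  have J: "reach X b (?P r + l, \<sigma>)" if "blk lit (Suc q) r = Jump l" "0 < l" "r < 9" "reach X b (?P r, \<sigma>)" for r l
    using jump_reach[OF q that(3) that(1,2,4)] .
  have T: "reach X b (if x = snd (lit (Suc q) j) then ?P (r + 1) else ?P (r + 2), \<sigma>)"
    if "blk lit (Suc q) r = tst (lit (Suc q) j)" "r < 9" "\<sigma> (fst (lit (Suc q) j)) = Some x" "reach X b (?P r, \<sigma>)" for r j x
  proof -
    have eq: "(if x = snd (lit (Suc q) j) then ?P (r + 1) else ?P (r + 2)) =
       (if x = snd (lit (Suc q) j) then ?P r + 1 else ?P r + 2)" by simp
    show ?thesis unfolding eq by (rule tst_reach[OF q that(2,1,3,4)])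
  qed
  show ?thesis
  proof (cases "b ! q")
    case False
    hence "reach X b (?P 1, \<sigma>)" using R0' by simp
    from J[of 1 8, OF _ _ _ this] show ?thesis by (simp add: blk_def)
  next
    case True
    hence R2: "reach X b (?P 2, \<sigma>)" using R0' by (simp add: numeral_eq_Suc)
    obtain x0 where x0: "\<sigma> (fst (lit (Suc q) 0)) = Some x0" using full[of 0] by auto
    obtain x1 where x1: "\<sigma> (fst (lit (Suc q) 1)) = Some x1" using full[of 1] by auto
    obtain x2 where x2: "\<sigma> (fst (lit (Suc q) 2)) = Some x2" using full[of 2] by auto
    have T2: "reach X b (if x0 = snd (lit (Suc q) 0) then ?P (2+1) else ?P (2+2), \<sigma>)"
      using T[of 2 0 x0, OF _ _ x0 R2] by (simp add: blk_def)
    show ?thesis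
    proof (cases "x0 = snd (lit (Suc q) 0)")
      case True
      hence "reach X b (?P 3, \<sigma>)" using T2 by (simp only: if_True) simp
      from J[of 3 6, OF _ _ _ this] show ?thesis by (simp add: blk_def)
    next
      case F0: False
      hence R4: "reach X b (?P 4, \<sigma>)" using T2 by (simp only: if_False) simp
      have T4: "reach X b (if x1 = snd (lit (Suc q) 1) then ?P (4+1) else ?P (4+2), \<sigma>)"
        using T[of 4 1 x1, OF _ _ x1 R4] by (simp add: blk_def)
      show ?thesis
      proof (cases "x1 = snd (lit (Suc q) 1)")
        case True
        hence "reach X b (?P 5, \<sigma>)" using T4 by (simp only: if_True) simp
        from J[of 5 4, OF _ _ _ this] show ?thesis by (simp add: blk_def)
      next
        case F1: False
        hence R6: "reach X b (?P 6, \<sigma>)" using T4 by (simp only: if_False) simp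
        obtain j where j: "j < 3" "\<sigma> (fst (lit (Suc q) j)) = Some (snd (lit (Suc q) j))"
          using sat True by blast
        have "j = 0 \<or> j = 1 \<or> j = 2" using j(1) by auto
        hence "j = 2" using j F0 F1 x0 x1 by auto
        hence x2s: "x2 = snd (lit (Suc q) 2)" using j x2 by simp
        have "reach X b (?P 7, \<sigma>)"
          using T[of 6 2 x2, OF _ _ x2 R6] x2s by (simp add: blk_def)
        from J[of 7 2, OF _ _ _ this] show ?thesis by (simp add: blk_def)
      qed
    qed
  qed
qed

lemma complete:
  assumes lb: "length b = n"
    and sat: "\<forall>i\<in>{1..D}. b ! (i-1) \<longrightarrow> (\<exists>(v, s)\<in>Cl i. asg v = s)"
  shows "\<exists>c. reach X b c \<and> at_out X (fst c)"
proof -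
  define \<sigma>r where "\<sigma>r p = (\<lambda>x. if 1 \<le> x \<and> x < p then Some (asg x) else None)" for p
  have R1: "1 \<le> p \<longrightarrow> p \<le> K + 1 \<longrightarrow> reach X b (p, \<sigma>r p)" for p
  proof (induction p)
    case 0 show ?case by simp
  next
    case (Suc p)
    show ?case
    proof (cases "p = 0")
      case True
      have "\<sigma>r 1 = Map.empty" by (auto simp: \<sigma>r_def)
      thus ?thesis using True by (simp add: reach_def)
    next
      case False
      show ?thesis
      proof (intro impI)
        assume "Suc p \<le> K + 1"
        hence pk: "1 \<le> p" "p \<le> K" using False by auto
        hence R: "reach X b (p, \<sigma>r p)" using Suc.IH by simp
        have nn: "\<sigma>r p p = None" by (simp add: \<sigma>r_def)
        have rp: "(asg p, (\<sigma>r p)(p \<mapsto> asg p)) \<in> replies b (Split p) (\<sigma>r p)"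
          using nn by (cases "asg p") auto
        have pl: "1 \<le> p" "p \<le> length X" using pk by auto
        have st: "step X b (p, \<sigma>r p) (p + 1, (\<sigma>r p)(p \<mapsto> asg p))"
          by (rule step_plain[OF pl at_split[OF pk] rp])
        have "(\<sigma>r p)(p \<mapsto> asg p) = \<sigma>r (Suc p)" using pk by (auto simp: \<sigma>r_def fun_eq_iff less_Suc_eq)
        thus "reach X b (Suc p, \<sigma>r (Suc p))" using reach_step[OF R st] by simp
      qed
    qed
  qed
  define \<sigma>s where "\<sigma>s = \<sigma>r (K + 1)"
  have R2: "q \<le> D \<longrightarrow> reach X b (Suc (K + 9*q), \<sigma>s)" for q
  proof (induction q)
    case 0 show ?case using R1[of "K+1"] by (simp add: \<sigma>s_def)
  next
    case (Suc q)
    show ?case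
    proof
      assume qD: "Suc q \<le> D"
      hence q: "q < D" by simp
      have R: "reach X b (Suc (K + 9*q), \<sigma>s)" using Suc.IH q by simp
      have sq: "1 \<le> Suc q" "Suc q \<le> D" using q by auto
      have vK: "1 \<le> fst (lit (Suc q) j) \<and> fst (lit (Suc q) j) \<le> K" if "j < 3" for j
        using litv[OF sq litin[OF sq that]] .
      have sv: "\<sigma>s (fst (lit (Suc q) j)) = Some (asg (fst (lit (Suc q) j)))" if "j < 3" for j
        using vK[OF that] by (simp add: \<sigma>s_def \<sigma>r_def)
      have full: "\<exists>x. \<sigma>s (fst (lit (Suc q) j)) = Some x" if "j < 3" for j
        using sv[OF that] by blast
      have satq: "\<exists>j<3. \<sigma>s (fst (lit (Suc q) j)) = Some (snd (lit (Suc q) j))" if bq: "b ! q"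
      proof -
        have "\<exists>(v, s)\<in>Cl (Suc q). asg v = s" using sat sq bq by auto
        then obtain v s where vs: "(v, s) \<in> Cl (Suc q)" "asg v = s" by auto
        obtain j where j: "j < 3" "lit (Suc q) j = (v, s)" using litall[OF sq vs(1)] by blast
        show ?thesis using sv[OF j(1)] j vs by (intro exI[of _ j]) auto
      qed
      show "reach X b (Suc (K + 9 * Suc q), \<sigma>s)" by (rule block_pass[OF q lb R full satq])
    qed
  qed
  have "reach X b (K + 9*D + 1, \<sigma>s)" using R2[of D] by simp
  moreover have "at_out X (K + 9*D + 1)" using at_outT by (simp add: at_out_def)
  ultimately show ?thesis by (intro exI[of _ "(K + 9*D + 1, \<sigma>s)"]) simp
qed

lemma sound:
  assumes lb: "length b = n" and R: "reach X b c" and o: "at_out X (fst c)"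
  shows "\<exists>asg. \<forall>i\<in>{1..D}. b ! (i-1) \<longrightarrow> (\<exists>(v, s)\<in>Cl i. asg v = s)"
proof -
  obtain p \<sigma> where c: "c = (p, \<sigma>)" by fastforce
  have I: "Inv b (p, \<sigma>)" using reach_Inv[OF R lb] c by simp
  have g: "\<forall>c\<in>{1..D}. good b \<sigma> c" using out_pos[OF I] o c by simp
  define asg where "asg v = (\<sigma> v = Some True)" for v
  have "\<forall>i\<in>{1..D}. b ! (i-1) \<longrightarrow> (\<exists>(v, s)\<in>Cl i. asg v = s)"
  proof (intro ballI impI)
    fix i assume i: "i \<in> {1..D}" and bi: "b ! (i-1)"
    then obtain j where j: "j < 3" "\<sigma> (fst (lit i j)) = Some (snd (lit i j))"
      using g unfolding good_def by blast
    have "lit i j \<in> Cl i" using litin[of i j] i j by auto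
    moreover have "asg (fst (lit i j)) = snd (lit i j)" using j by (simp add: asg_def)
    ultimately show "\<exists>(v, s)\<in>Cl i. asg v = s" by (intro bexI[of _ "lit i j"]) (auto simp: case_prod_beta)
  qed
  thus ?thesis by blast
qed

theorem computes:
  "splitting_computes X n (\<lambda>b. \<exists>asg. \<forall>i\<in>{1..D}. b ! (i-1) \<longrightarrow> (\<exists>(v, s)\<in>Cl i. asg v = s))"
  unfolding splitting_computes_def
proof (intro allI impI conjI)
  fix b :: "bool list" and c assume lb: "length b = n" and R: "reach X b c"
  obtain p \<sigma> where c: "c = (p, \<sigma>)" by fastforce
  show "at_term X (fst c) \<or> (\<exists>c'. step X b c c')"
    using no_deadlock[of b p \<sigma>] reach_Inv[OF R lb] lb c by simp
next
  fix b :: "bool list" assume lb: "length b = n"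
  show "(\<exists>asg. \<forall>i\<in>{1..D}. b ! (i-1) \<longrightarrow> (\<exists>(v, s)\<in>Cl i. asg v = s)) =
        (\<exists>c. reach X b c \<and> at_out X (fst c))"
    using complete[OF lb] sound[OF lb] by blast
qed

lemma in_SIS: "X \<in> SIS_br"
proof -
  have "instr_ok (instrAt K D lit p)" if "1 \<le> p" "p \<le> K + 9*D + 2" for p
  proof (cases "p \<le> K")
    case True thus ?thesis using that by (simp add: instrAt_def)
  next
    case False
    show ?thesis
    proof (cases "p \<le> K + 9*D")
      case True
      define q where "q = (p - K - 1) div 9"
      define r where "r = (p - K - 1) mod 9"
      have q: "q < D" using True False unfolding q_def by auto
      have sq: "1 \<le> Suc q" "Suc q \<le> D" using q by auto
      have lv: "1 \<le> fst (lit (Suc q) j)" if "j < 3" for j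
        using litv[OF sq litin[OF sq that]] by simp
      have "instr_ok (blk lit (Suc q) r)"
        using lv[of 0] lv[of 1] lv[of 2] by (simp add: blk_def tst_def)
      thus ?thesis using True False by (simp add: instrAt_def q_def r_def)
    next
      case F2: False thus ?thesis using False by (simp add: instrAt_def)
    qed
  qed
  thus ?thesis unfolding SIS_br_def prog_def by auto
qed

end

lemma d_ge: "k \<le> d k"
  unfolding d_def by simp

lemma kidx_props: "d (kidx n) \<le> n \<and> kidx n \<le> n"
proof -
  have "d (kidx n) \<le> n" unfolding kidx_def
  proof (rule GreatestI_nat[where b = n])
    show "d 0 \<le> n" by (simp add: d_def binomial_eq_0)
    fix y assume "d y \<le> n" thus "y \<le> n" using d_ge le_trans by blast
  qed
  thus ?thesis using d_ge le_trans by blast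
qed

theorem theorem10:
  fixes \<alpha> :: "nat \<Rightarrow> nat \<Rightarrow> literal set"
  assumes "\<forall>k. bij_betw (\<alpha> k) {1..d k} (Lits k)"
    and "\<forall>i. \<forall>j \<in> {1..d i}. \<alpha> (Suc i) j = \<alpha> i j"
  shows "threeSATC \<alpha> \<in> P_lsis"
  unfolding P_lsis_def
proof (intro CollectI exI[of _ "[:2, 10:]"] allI)
  fix n
  define K where "K = kidx n"
  define D where "D = d K"
  define lit where "lit i j = (let xs = sorted_list_of_set (\<alpha> K i) in xs ! min j (length xs - 1))" for i j
  have KD: "D \<le> n" "K \<le> n" using kidx_props[of n] by (auto simp: K_def D_def)
  have inL: "\<alpha> K i \<in> Lits K" if "1 \<le> i" "i \<le> D" for i
  proof -
    have "\<alpha> K ` {1..d K} = Lits K" using assms(1) by (simp add: bij_betw_def)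
    moreover have "i \<in> {1..d K}" using that by (simp add: D_def)
    ultimately show ?thesis by blast
  qed
  have P: "P3 K D n (\<alpha> K) lit"
  proof
    show "D \<le> n" by (rule KD)
  next
    fix i j assume i: "1 \<le> i" "i \<le> D" and j: "j < (3::nat)"
    let ?L = "\<alpha> K i"
    have L: "finite ?L" "1 \<le> card ?L" using inL[OF i] unfolding Lits_def
      by (auto intro: card_ge_0_finite)
    let ?xs = "sorted_list_of_set ?L"
    have "length ?xs = card ?L" by simp
    hence "min j (length ?xs - 1) < length ?xs" using L by linarith
    hence "?xs ! min j (length ?xs - 1) \<in> set ?xs" by (rule nth_mem)
    thus "lit i j \<in> ?L" using L by (simp add: lit_def Let_def)
  next
    fix i l assume i: "1 \<le> i" "i \<le> D" and l: "l \<in> \<alpha> K i"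
    let ?L = "\<alpha> K i"
    have L: "finite ?L" "1 \<le> card ?L" "card ?L \<le> 3" using inL[OF i] unfolding Lits_def
      by (auto intro: card_ge_0_finite)
    let ?xs = "sorted_list_of_set ?L"
    have "l \<in> set ?xs" using L l by simp
    then obtain m where m: "m < length ?xs" "?xs ! m = l" by (meson in_set_conv_nth)
    have "length ?xs = card ?L" by simp
    hence "m < 3" "min m (length ?xs - 1) = m" using m L by auto
    thus "\<exists>j<3. lit i j = l" using m by (intro exI[of _ m]) (simp add: lit_def Let_def)
  next
    fix i l assume i: "1 \<le> i" "i \<le> D" and l: "l \<in> \<alpha> K i"
    thus "1 \<le> fst l \<and> fst l \<le> K" using inL[OF i] unfolding Lits_def by auto
  qed
  have eq: "threeSATC \<alpha> n = (\<lambda>b. \<exists>asg. \<forall>i\<in>{1..D}. b ! (i-1) \<longrightarrow> (\<exists>(v, s)\<in>\<alpha> K i. asg v = s))"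
    by (simp add: threeSATC_def K_def D_def fun_eq_iff)
  have len: "length (prog K D lit) \<le> poly [:2, 10:] n"
    using KD by (simp add: prog_def)
  show "\<exists>X\<in>SIS_br. splitting_computes X n (threeSATC \<alpha> n) \<and> length X \<le> poly [:2, 10:] n"
    using P3.computes[OF P] P3.in_SIS[OF P] len unfolding eq by blast
qed

end
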